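(* Let $C\ge0$. If a knowledge state algorithm $\mathcal A$ is $C$-competitive as a knowledge state algorithm, then $\mathcal A$ is $C$-competitive, i.e. there is a constant $K$ with $E(\mathrm{cost}_{\mathcal A}(\varrho))\le C\cdot\mathrm{cost}_{\mathrm{opt}}(\varrho)+K$ for every finite request sequence $\varrho$.
   Context: Online problem: a set $\mathcal X$ of states, a set $\mathcal R$ of requests, a start state $s^0$, a function $d:\mathcal X\times\mathcal X\to[0,\infty)$ with $d(x,x)=0$ and $d(x,z)\le d(x,y)+d(y,z)$, and $\mathrm{cost}:\mathcal X\times\mathcal R\times\mathcal X\to[0,\infty)$ with $\mathrm{cost}(u,r,v)\le d(u,x)+\mathrm{cost}(x,r,y)+d(y,v)$. For $\varrho=r^1\dots r^n$, $\mathrm{cost}_{\mathrm{opt}}(\varrho)$ is the infimum of $\sum_{t=1}^n\mathrm{cost}(x^{t-1},r^t,x^t)$ over all $x^1,\dots,x^n$ with $x^0=s^0$. $\Pi$ is the set of finitely supported probability distributions on $\mathcal X$; $\mathrm{cost}(\pi,r,\pi')$ is the minimum transportation cost $\min_\gamma\sum_{x,y}\gamma(x,y)\mathrm{cost}(x,r,y)$ over distributions $\gamma$ on $\mathrm{supp}(\pi)\times\mathrm{supp}(\pi')$ with marginals $\pi,\pi'$. An estimator is a function $\omega:\mathcal X\to[0,\infty)$ with $\omega(y)\le\omega(x)+d(x,y)$ for all $x,y$. The update operator is $(\omega\wedge r)(y)=\inf_{x\in\mathcal X}\{\omega(x)+\mathrm{cost}(x,r,y)\}$. Knowledge state algorithm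 $\mathcal A$: a knowledge state is a pair $k=(\pi,\omega)$ with $\pi\in\Pi$ and $\omega$ an estimator. The initial knowledge state is $k^0=(s^0,\omega^0)$ with $\omega^0$ an estimator satisfying $\omega^0(s^0)=0$ (e.g. $\omega^0=d(s^0,\cdot)$). For each knowledge state $k=(\pi,\omega)$ and request $r$, $\mathcal A$ specifies finitely many subsequent knowledge states $k_i=(\pi_i,\omega_i)$ with weights $\lambda_i>0$, $\sum_i\lambda_i=1$, and a real number $\mathrm{adjust}_{\mathcal A}(k,r)$ such that $(\omega\wedge r)(x)\ge\mathrm{adjust}_{\mathcal A}(k,r)+\sum_i\lambda_i\omega_i(x)$ for all $x\in\mathcal X$. On request sequence $r^1\dots r^n$, $k^t$ is chosen among the subsequents of $(k^{t-1},r^t)$, equal to $k_i$ with probability $\lambda_i$. Step cost $\mathrm{cost}_{\mathcal A}(k,r)=\mathrm{cost}(\pi,r,\sum_i\lambda_i\pi_i)$; $\mathrm{cost}_{\mathcal A}(\varrho)=\sum_t\mathrm{cost}_{\mathcal A}(k^{t-1},r^t)$ and $\mathrm{adjust}_{\mathcal A}(\varrho)=\sum_t\mathrm{adjust}_{\mathcal A}(k^{t-1},r^t)$. Writing $k^n=(\pi^n,\omega^n)$, $\mathcal A$ is $C$-competitive as a knowledge state algorithm if there is a constant $K$ with $E(\mathrm{cost}_{\mathcal A}(\varrho))\le C\cdot E(\mathrm{adjust}_{\mathcal A}(\varrho)+\omega^n(x))+K$ for every request sequence $\varrho=r^1\dots r^n$ and every $x\in\mathcal X$. *)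

theory Defs
  imports "HOL-Probability.Probability"
begin

text \<open>Knowledge states are pairs (pi, omega) with pi a (finitely supported) pmf on
states and omega an estimator. A knowledge state algorithm is given by a function
step mapping a knowledge state and a request to a (finitely supported) distribution
over subsequent knowledge states (the weights lambda_i), and a function adjust.\<close>

type_synonym ('x) kstate = "'x pmf \<times> ('x \<Rightarrow> real)"

definition estimator :: "('x \<Rightarrow> 'x \<Rightarrow> real) \<Rightarrow> ('x \<Rightarrow> real) \<Rightarrow> bool" where
  "estimator d \<omega> \<longleftrightarrow> (\<forall>x. 0 \<le> \<omega> x) \<and> (\<forall>x y. \<omega> y \<le> \<omega> x + d x y)"

definition update :: "('x \<Rightarrow> 'r \<Rightarrow> 'x \<Rightarrow> real) \<Rightarrow> ('x \<Rightarrow> real) \<Rightarrow> 'r \<Rightarrow> 'x \<Rightarrow> real" where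
  "update cost \<omega> r y = (INF x. \<omega> x + cost x r y)"

definition transport_cost :: "('x \<Rightarrow> 'r \<Rightarrow> 'x \<Rightarrow> real) \<Rightarrow> 'x pmf \<Rightarrow> 'r \<Rightarrow> 'x pmf \<Rightarrow> real" where
  "transport_cost cost \<pi> r \<pi>' =
     (INF \<gamma> \<in> {\<gamma>. map_pmf fst \<gamma> = \<pi> \<and> map_pmf snd \<gamma> = \<pi>'}.
        measure_pmf.expectation \<gamma> (\<lambda>(x, y). cost x r y))"

definition ksa_step_cost ::
  "('x \<Rightarrow> 'r \<Rightarrow> 'x \<Rightarrow> real) \<Rightarrow> ('x kstate \<Rightarrow> 'r \<Rightarrow> 'x kstate pmf) \<Rightarrow> 'x kstate \<Rightarrow> 'r \<Rightarrow> real" where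
  "ksa_step_cost cost step k r = transport_cost cost (fst k) r (bind_pmf (step k r) (\<lambda>k'. fst k'))"

fun ksa_exp_cost ::
  "('x \<Rightarrow> 'r \<Rightarrow> 'x \<Rightarrow> real) \<Rightarrow> ('x kstate \<Rightarrow> 'r \<Rightarrow> 'x kstate pmf) \<Rightarrow> 'x kstate \<Rightarrow> 'r list \<Rightarrow> real" where
  "ksa_exp_cost cost step k [] = 0"
| "ksa_exp_cost cost step k (r # rs) =
     ksa_step_cost cost step k r
     + measure_pmf.expectation (step k r) (\<lambda>k'. ksa_exp_cost cost step k' rs)"

fun ksa_exp_adjust ::
  "('x kstate \<Rightarrow> 'r \<Rightarrow> 'x kstate pmf) \<Rightarrow> ('x kstate \<Rightarrow> 'r \<Rightarrow> real) \<Rightarrow> 'x kstate \<Rightarrow> 'r list \<Rightarrow> 'x \<Rightarrow> real" where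
  "ksa_exp_adjust step adjust k [] x = snd k x"
| "ksa_exp_adjust step adjust k (r # rs) x =
     adjust k r
     + measure_pmf.expectation (step k r) (\<lambda>k'. ksa_exp_adjust step adjust k' rs x)"

fun path_cost :: "('x \<Rightarrow> 'r \<Rightarrow> 'x \<Rightarrow> real) \<Rightarrow> 'x \<Rightarrow> 'r list \<Rightarrow> 'x list \<Rightarrow> real" where
  "path_cost cost s (r # rs) (x # xs) = cost s r x + path_cost cost x rs xs"
| "path_cost cost s _ _ = 0"

definition cost_opt :: "('x \<Rightarrow> 'r \<Rightarrow> 'x \<Rightarrow> real) \<Rightarrow> 'x \<Rightarrow> 'r list \<Rightarrow> real" where
  "cost_opt cost s0 rs = (INF xs \<in> {xs. length xs = length rs}. path_cost cost s0 rs xs)"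

definition is_ksa ::
  "('x \<Rightarrow> 'x \<Rightarrow> real) \<Rightarrow> ('x \<Rightarrow> 'r \<Rightarrow> 'x \<Rightarrow> real) \<Rightarrow> ('x kstate \<Rightarrow> 'r \<Rightarrow> 'x kstate pmf)
    \<Rightarrow> ('x kstate \<Rightarrow> 'r \<Rightarrow> real) \<Rightarrow> bool" where
  "is_ksa d cost step adjust \<longleftrightarrow>
    (\<forall>\<pi> \<omega> r. finite (set_pmf \<pi>) \<and> estimator d \<omega> \<longrightarrow>
       finite (set_pmf (step (\<pi>, \<omega>) r))
       \<and> (\<forall>k' \<in> set_pmf (step (\<pi>, \<omega>) r). finite (set_pmf (fst k')) \<and> estimator d (snd k'))
       \<and> (\<forall>x. adjust (\<pi>, \<omega>) r
               + measure_pmf.expectation (step (\<pi>, \<omega>) r) (\<lambda>k'. snd k' x)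
             \<le> update cost \<omega> r x))"

definition ksa_competitive ::
  "('x \<Rightarrow> 'r \<Rightarrow> 'x \<Rightarrow> real) \<Rightarrow> ('x kstate \<Rightarrow> 'r \<Rightarrow> 'x kstate pmf) \<Rightarrow> ('x kstate \<Rightarrow> 'r \<Rightarrow> real)
    \<Rightarrow> 'x kstate \<Rightarrow> real \<Rightarrow> bool" where
  "ksa_competitive cost step adjust k0 C \<longleftrightarrow>
    (\<exists>K. \<forall>rs x. ksa_exp_cost cost step k0 rs \<le> C * ksa_exp_adjust step adjust k0 rs x + K)"

definition competitive ::
  "('x \<Rightarrow> 'r \<Rightarrow> 'x \<Rightarrow> real) \<Rightarrow> 'x \<Rightarrow> ('x kstate \<Rightarrow> 'r \<Rightarrow> 'x kstate pmf) \<Rightarrow> 'x kstate \<Rightarrow> real \<Rightarrow> bool" where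
  "competitive cost s0 step k0 C \<longleftrightarrow>
    (\<exists>K. \<forall>rs. ksa_exp_cost cost step k0 rs \<le> C * cost_opt cost s0 rs + K)"

end

theory Submission
  imports Defs
begin

fun upd_iter :: "('x \<Rightarrow> 'r \<Rightarrow> 'x \<Rightarrow> real) \<Rightarrow> ('x \<Rightarrow> real) \<Rightarrow> 'r list \<Rightarrow> 'x \<Rightarrow> real" where
  "upd_iter cost \<omega> [] = \<omega>"
| "upd_iter cost \<omega> (r # rs) = upd_iter cost (update cost \<omega> r) rs"

lemma update_lb:
  assumes cn: "\<And>x r y. 0 \<le> cost x r y" and lb: "\<And>y. b \<le> \<omega> y"
  shows "b \<le> update cost \<omega> r z"
  unfolding update_def
proof (rule cINF_greatest)
  show "UNIV \<noteq> {}" by simp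
  fix y show "b \<le> \<omega> y + cost y r z" using lb[of y] cn[of y r z] by linarith
qed

lemma update_lower:
  assumes cn: "\<And>x r y. 0 \<le> cost x r y" and lb: "\<And>y. b \<le> \<omega> y"
  shows "update cost \<omega> r z \<le> \<omega> y + cost y r z"
  unfolding update_def
proof (rule cINF_lower)
  show "bdd_below (range (\<lambda>x. \<omega> x + cost x r z))"
    by (rule bdd_belowI[of _ b]) (use lb cn in \<open>auto intro: add_increasing2\<close>)
qed simp

lemma upd_iter_lb:
  assumes cn: "\<And>x r y. 0 \<le> cost x r y" and lb: "\<And>y. b \<le> \<omega> y"
  shows "b \<le> upd_iter cost \<omega> rs z"
  using lb
proof (induction rs arbitrary: \<omega>)
  case Nil then show ?case by simp
next
  case (Cons r rs)
  have "\<And>y. b \<le> update cost \<omega> r y" by (rule update_lb[OF cn Cons.prems])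
  then show ?case using Cons.IH by simp
qed

lemma upd_iter_mono:
  assumes cn: "\<And>x r y. 0 \<le> cost x r y" and lb: "\<And>y. b \<le> \<omega> y"
    and le: "\<And>y. \<omega> y \<le> \<omega>' y"
  shows "upd_iter cost \<omega> rs z \<le> upd_iter cost \<omega>' rs z"
  using lb le
proof (induction rs arbitrary: \<omega> \<omega>')
  case Nil then show ?case by simp
next
  case (Cons r rs)
  have lb2: "\<And>y. b \<le> update cost \<omega> r y" by (rule update_lb[OF cn Cons.prems(1)])
  have "\<And>y. update cost \<omega> r y \<le> update cost \<omega>' r y"
  proof -
    fix y
    show "update cost \<omega> r y \<le> update cost \<omega>' r y"
      unfolding update_def
    proof (rule cINF_mono)
      show "bdd_below (range (\<lambda>x. \<omega> x + cost x r y))"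
        by (rule bdd_belowI[of _ b]) (use Cons.prems(1) cn in \<open>auto intro: add_increasing2\<close>)
      fix m show "\<exists>n\<in>UNIV. \<omega> n + cost n r y \<le> \<omega>' m + cost m r y"
        using Cons.prems(2)[of m] by (auto intro!: exI[of _ m])
    qed simp
  qed
  then show ?case using Cons.IH[OF lb2] by simp
qed

lemma upd_iter_concave:
  fixes M :: "'k pmf" and f :: "'k \<Rightarrow> 'x \<Rightarrow> real"
  assumes cn: "\<And>x r y. 0 \<le> cost x r y" and fin: "finite (set_pmf M)"
    and fnn: "\<And>k y. k \<in> set_pmf M \<Longrightarrow> 0 \<le> f k y"
  shows "c + measure_pmf.expectation M (\<lambda>k. upd_iter cost (f k) rs z)
         \<le> upd_iter cost (\<lambda>y. c + measure_pmf.expectation M (\<lambda>k. f k y)) rs z"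
  using fnn
proof (induction rs arbitrary: f c)
  case Nil then show ?case by simp
next
  case (Cons r rs)
  define g where "g = (\<lambda>k. update cost (f k) r)"
  have gnn: "\<And>k y. k \<in> set_pmf M \<Longrightarrow> 0 \<le> g k y"
    unfolding g_def by (rule update_lb[OF cn Cons.prems])
  have lbE: "\<And>y. c \<le> c + measure_pmf.expectation M (\<lambda>k. f k y)"
    using Cons.prems by (auto intro!: integral_nonneg_AE simp: AE_measure_pmf_iff)
  have key: "\<And>z. c + measure_pmf.expectation M (\<lambda>k. g k z)
      \<le> update cost (\<lambda>y. c + measure_pmf.expectation M (\<lambda>k. f k y)) r z"
  proof -
    fix z
    show "c + measure_pmf.expectation M (\<lambda>k. g k z)
      \<le> update cost (\<lambda>y. c + measure_pmf.expectation M (\<lambda>k. f k y)) r z"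
      unfolding update_def
    proof (rule cINF_greatest)
      fix y
      have "measure_pmf.expectation M (\<lambda>k. g k z) \<le> measure_pmf.expectation M (\<lambda>k. f k y + cost y r z)"
        unfolding g_def
        by (rule integral_mono_AE)
           (auto simp: AE_measure_pmf_iff integrable_measure_pmf_finite[OF fin]
                 intro: update_lower[OF cn Cons.prems])
      also have "\<dots> = measure_pmf.expectation M (\<lambda>k. f k y) + cost y r z"
        by (simp add: integrable_measure_pmf_finite[OF fin])
      finally show "c + measure_pmf.expectation M (\<lambda>k. g k z)
          \<le> c + measure_pmf.expectation M (\<lambda>k. f k y) + cost y r z" by simp
    qed simp
  qed
  have "c + measure_pmf.expectation M (\<lambda>k. upd_iter cost (f k) (r # rs) z)
      = c + measure_pmf.expectation M (\<lambda>k. upd_iter cost (g k) rs z)"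
    by (simp add: g_def)
  also have "\<dots> \<le> upd_iter cost (\<lambda>y. c + measure_pmf.expectation M (\<lambda>k. g k y)) rs z"
    by (rule Cons.IH[OF gnn])
  also have "\<dots> \<le> upd_iter cost (update cost (\<lambda>y. c + measure_pmf.expectation M (\<lambda>k. f k y)) r) rs z"
  proof (rule upd_iter_mono[OF cn, of c])
    fix y show "c \<le> c + measure_pmf.expectation M (\<lambda>k. g k y)"
      using gnn by (auto intro!: integral_nonneg_AE simp: AE_measure_pmf_iff)
  qed (rule key)
  finally show ?case by simp
qed

lemma adjust_le_upd:
  assumes cn: "\<And>x r y. 0 \<le> cost x r y" and ksa: "is_ksa d cost step adjust"
  shows "finite (set_pmf (fst k)) \<Longrightarrow> estimator d (snd k) \<Longrightarrow>
    ksa_exp_adjust step adjust k rs x \<le> upd_iter cost (snd k) rs x"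
proof (induction rs arbitrary: k)
  case Nil then show ?case by simp
next
  case (Cons r rs)
  obtain \<pi> \<omega> where k: "k = (\<pi>, \<omega>)" by (cases k)
  let ?M = "step k r"
  have P: "finite (set_pmf ?M)"
     "\<And>k'. k' \<in> set_pmf ?M \<Longrightarrow> finite (set_pmf (fst k')) \<and> estimator d (snd k')"
     "\<And>x. adjust k r + measure_pmf.expectation ?M (\<lambda>k'. snd k' x) \<le> update cost \<omega> r x"
    using ksa Cons.prems unfolding is_ksa_def k by auto
  have nn: "\<And>k' y. k' \<in> set_pmf ?M \<Longrightarrow> 0 \<le> snd k' y"
    using P(2) unfolding estimator_def by auto
  have "ksa_exp_adjust step adjust k (r # rs) x
      = adjust k r + measure_pmf.expectation ?M (\<lambda>k'. ksa_exp_adjust step adjust k' rs x)"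
    by simp
  also have "\<dots> \<le> adjust k r + measure_pmf.expectation ?M (\<lambda>k'. upd_iter cost (snd k') rs x)"
    using P(2) Cons.IH
    by (auto intro!: integral_mono_AE simp: AE_measure_pmf_iff integrable_measure_pmf_finite[OF P(1)])
  also have "\<dots> \<le> upd_iter cost (\<lambda>y. adjust k r + measure_pmf.expectation ?M (\<lambda>k'. snd k' y)) rs x"
    by (rule upd_iter_concave[OF cn P(1) nn])
  also have "\<dots> \<le> upd_iter cost (update cost \<omega> r) rs x"
  proof (rule upd_iter_mono[OF cn, of "adjust k r"])
    fix y show "adjust k r \<le> adjust k r + measure_pmf.expectation ?M (\<lambda>k'. snd k' y)"
      using nn by (auto intro!: integral_nonneg_AE simp: AE_measure_pmf_iff)
  qed (rule P(3))
  finally show ?case by (simp add: k)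
qed

lemma upd_le_path:
  assumes cn: "\<And>x r y. 0 \<le> cost x r y"
  shows "(\<And>y. 0 \<le> \<omega> y) \<Longrightarrow> length xs = length rs \<Longrightarrow>
    upd_iter cost \<omega> rs (last (s # xs)) \<le> \<omega> s + path_cost cost s rs xs"
proof (induction rs arbitrary: xs \<omega> s)
  case Nil then show ?case by simp
next
  case (Cons r rs)
  then obtain x xs' where xs: "xs = x # xs'" "length xs' = length rs" by (cases xs) auto
  have nn: "\<And>y. 0 \<le> update cost \<omega> r y" by (rule update_lb[OF cn Cons.prems(1)])
  have "upd_iter cost \<omega> (r # rs) (last (s # xs)) = upd_iter cost (update cost \<omega> r) rs (last (x # xs'))"
    by (simp add: xs)
  also have "\<dots> \<le> update cost \<omega> r x + path_cost cost x rs xs'"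
    by (rule Cons.IH[OF nn xs(2)])
  also have "\<dots> \<le> \<omega> s + cost s r x + path_cost cost x rs xs'"
    using update_lower[OF cn Cons.prems(1), where r=r and z=x and y=s] by simp
  finally show ?case by (simp add: xs)
qed

theorem mainTheorem7:
  fixes d :: "'x \<Rightarrow> 'x \<Rightarrow> real"
    and cost :: "'x \<Rightarrow> 'r \<Rightarrow> 'x \<Rightarrow> real"
    and s0 :: 'x
    and \<omega>0 :: "'x \<Rightarrow> real"
    and step :: "'x kstate \<Rightarrow> 'r \<Rightarrow> 'x kstate pmf"
    and adjust :: "'x kstate \<Rightarrow> 'r \<Rightarrow> real"
    and C :: real
  assumes d_nonneg: "\<And>x y. 0 \<le> d x y"
    and d_refl: "\<And>x. d x x = 0"
    and d_tri: "\<And>x y z. d x z \<le> d x y + d y z"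
    and cost_nonneg: "\<And>x r y. 0 \<le> cost x r y"
    and cost_tri: "\<And>u x r y v. cost u r v \<le> d u x + cost x r y + d y v"
    and est0: "estimator d \<omega>0"
    and est0_s0: "\<omega>0 s0 = 0"
    and ksa: "is_ksa d cost step adjust"
    and C_nonneg: "0 \<le> C"
    and comp: "ksa_competitive cost step adjust (return_pmf s0, \<omega>0) C"
  shows "competitive cost s0 step (return_pmf s0, \<omega>0) C"
proof -
  obtain K where K: "\<And>rs x. ksa_exp_cost cost step (return_pmf s0, \<omega>0) rs
      \<le> C * ksa_exp_adjust step adjust (return_pmf s0, \<omega>0) rs x + K"
    using comp unfolding ksa_competitive_def by blast
  have nn0: "\<And>y. 0 \<le> \<omega>0 y" using est0 unfolding estimator_def by auto
  have path: "ksa_exp_cost cost step (return_pmf s0, \<omega>0) rs \<le> C * path_cost cost s0 rs xs + K"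
    if "length xs = length rs" for rs xs
  proof -
    let ?x = "last (s0 # xs)"
    have "ksa_exp_adjust step adjust (return_pmf s0, \<omega>0) rs ?x \<le> upd_iter cost \<omega>0 rs ?x"
      using adjust_le_upd[OF cost_nonneg ksa, of "(return_pmf s0, \<omega>0)"] est0 by simp
    also have "\<dots> \<le> path_cost cost s0 rs xs"
      using upd_le_path[OF cost_nonneg, where \<omega>=\<omega>0 and s=s0 and xs=xs and rs=rs, OF nn0 that] est0_s0 by simp
    finally show ?thesis using K[of rs ?x] C_nonneg
      by (meson add_le_cancel_right mult_left_mono order_trans)
  qed
  show ?thesis unfolding competitive_def
  proof (rule exI[of _ K], intro allI)
    fix rs :: "'r list"
    show "ksa_exp_cost cost step (return_pmf s0, \<omega>0) rs \<le> C * cost_opt cost s0 rs + K"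
    proof (cases "C = 0")
      case True
      then show ?thesis using path[of "replicate (length rs) s0" rs] by simp
    next
      case False
      then have Cp: "C > 0" using C_nonneg by simp
      have "(ksa_exp_cost cost step (return_pmf s0, \<omega>0) rs - K) / C \<le> cost_opt cost s0 rs"
        unfolding cost_opt_def
      proof (rule cINF_greatest)
        show "{xs :: 'x list. length xs = length rs} \<noteq> {}"
          by (metis (mono_tags) empty_Collect_eq length_replicate)
        fix xs :: "'x list" assume "xs \<in> {xs. length xs = length (rs :: 'r list)}"
        then show "(ksa_exp_cost cost step (return_pmf s0, \<omega>0) rs - K) / C \<le> path_cost cost s0 rs xs"
          using path[of xs rs] Cp by (simp add: pos_divide_le_eq mult.commute)
      qed
      then have "ksa_exp_cost cost step (return_pmf s0, \<omega>0) rs - K \<le> cost_opt cost s0 rs * C"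
        using Cp by (simp add: pos_divide_le_eq)
      then show ?thesis by (simp add: mult.commute)
    qed
  qed
qed

end
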